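(* Let $f,h:\mathbb{R}^p\to\mathbb{R}$ be convex functions and suppose that the set of minimizers of $\mathcal{L}(\beta)=f(\beta)+h(\beta)$ over $\mathbb{R}^p$ is nonempty. Let $D=\mathrm{diag}(d_1,\dots,d_p)$ with all $d_j>0$, let $\gamma\in(0,1)$, and let $\hat\beta^0\in\mathbb{R}^p$ be arbitrary. Consider the alternating linearization method (described in the context) run with the stopping test omitted, so that it generates infinite sequences $\{\hat\beta^k\}$, $\{s_f^k\}$, $\{s_h^k\}$. Then the sequence $\{\hat\beta^k\}$ converges to a minimizer $\beta^*$ of $\mathcal{L}$. Moreover, every accumulation point $(s_f^*,s_h^* )$ of the sequence $\{(s_f^k,s_h^k)\}$ satisfies $s_f^*\in\partial f(\beta^* )$, $s_h^*\in\partial h(\beta^* )$, and $s_f^*+s_h^*=0$.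
   Context: Notation: $\|v\|_D^2=v^TDv$. The alternating linearization method: set $\tilde\beta_f^0=\hat\beta^0$ and choose an arbitrary subgradient $s_f^0\in\partial f(\tilde\beta_f^0)$. At iteration $k$ (suppressing $k$; $\hat\beta$ is the current center, $s_f$ the current subgradient of $f$ at the current point $\tilde\beta_f$): (1) $h$-subproblem: with $\tilde f(\beta)=f(\tilde\beta_f)+s_f^T(\beta-\tilde\beta_f)$, let $\tilde\beta_h$ be the minimizer of $\tilde f(\beta)+h(\beta)+\tfrac12\|\beta-\hat\beta\|_D^2$, and set $s_h=-s_f-D(\tilde\beta_h-\hat\beta)$ (so $s_h\in\partial h(\tilde\beta_h)$). (2) $f$-subproblem: with $\tilde h(\beta)=h(\tilde\beta_h)+s_h^T(\beta-\tilde\beta_h)$, let the new $\tilde\beta_f$ be the minimizer of $f(\beta)+\tilde h(\beta)+\tfrac12\|\beta-\hat\beta\|_D^2$, and set the new $s_f=-s_h-D(\tilde\beta_f-\hat\beta)$ (so $s_f\in\partial f(\tilde\beta_f)$). (3) Update step: if $f(\tilde\beta_f)+h(\tilde\beta_f)\le(1-\gamma)\big[f(\hat\beta)+h(\hat\beta)\big]+\gamma\big[f(\tilde\beta_f)+\tilde h(\tilde\beta_f)\big]$, then set $\hat\beta\leftarrow\tilde\beta_f$; otherwise $\hat\beta$ is unchanged. The values after iteration $k$ are $\hat\beta^{k}$, $s_f^k$, $s_h^k$. (The stopping test, which would terminate when $f(\tilde\beta_f)+\tilde h(\tilde\beta_f)\ge f(\hat\beta)+h(\hat\beta)-\varepsilon$,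 is not applied.) *)

theory Defs
  imports "HOL-Analysis.Analysis"
begin

definition subgrad :: "(real^'n \<Rightarrow> real) \<Rightarrow> real^'n \<Rightarrow> (real^'n) set" where
  "subgrad f x = {s. \<forall>y. f y \<ge> f x + s \<bullet> (y - x)}"

definition diag_mult :: "real^'n \<Rightarrow> real^'n \<Rightarrow> real^'n" where
  "diag_mult d v = (\<chi> j. d $ j * v $ j)"

definition Dnorm2 :: "real^'n \<Rightarrow> real^'n \<Rightarrow> real" where
  "Dnorm2 d v = (\<Sum>j\<in>UNIV. d $ j * (v $ j)^2)"

definition is_minimizer :: "(real^'n \<Rightarrow> real) \<Rightarrow> real^'n \<Rightarrow> bool" where
  "is_minimizer F x \<longleftrightarrow> (\<forall>y. F x \<le> F y)"

text \<open>The alternating linearization method (stopping test omitted).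
  State after iteration k: centre bhat k, f-point bf k, subgradient sf k,
  h-point bh k, subgradient sh k (bh 0, sh 0 are not used).\<close>
definition alin_run ::
  "(real^'n \<Rightarrow> real) \<Rightarrow> (real^'n \<Rightarrow> real) \<Rightarrow> real^'n \<Rightarrow> real \<Rightarrow>
   (nat \<Rightarrow> real^'n) \<Rightarrow> (nat \<Rightarrow> real^'n) \<Rightarrow> (nat \<Rightarrow> real^'n) \<Rightarrow>
   (nat \<Rightarrow> real^'n) \<Rightarrow> (nat \<Rightarrow> real^'n) \<Rightarrow> bool" where
  "alin_run f h d \<gamma> bhat bf sf bh sh \<longleftrightarrow>
     bf 0 = bhat 0 \<and> sf 0 \<in> subgrad f (bf 0) \<and>
     (\<forall>k.
        is_minimizer (\<lambda>\<beta>. f (bf k) + sf k \<bullet> (\<beta> - bf k) + h \<beta>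
                           + Dnorm2 d (\<beta> - bhat k) / 2) (bh (Suc k)) \<and>
        sh (Suc k) = - sf k - diag_mult d (bh (Suc k) - bhat k) \<and>
        is_minimizer (\<lambda>\<beta>. f \<beta> + (h (bh (Suc k)) + sh (Suc k) \<bullet> (\<beta> - bh (Suc k)))
                           + Dnorm2 d (\<beta> - bhat k) / 2) (bf (Suc k)) \<and>
        sf (Suc k) = - sh (Suc k) - diag_mult d (bf (Suc k) - bhat k) \<and>
        bhat (Suc k) =
          (if f (bf (Suc k)) + h (bf (Suc k))
                \<le> (1 - \<gamma>) * (f (bhat k) + h (bhat k))
                  + \<gamma> * (f (bf (Suc k)) + (h (bh (Suc k)) + sh (Suc k) \<bullet> (bf (Suc k) - bh (Suc k))))
           then bf (Suc k) else bhat k))"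

end

theory Submission imports Defs begin

definition dinner :: "real^'n \<Rightarrow> real^'n \<Rightarrow> real^'n \<Rightarrow> real" where
  "dinner d u v = (\<Sum>j\<in>UNIV. d $ j * u $ j * v $ j)"

lemma diag_inner: "diag_mult d u \<bullet> v = dinner d u v"
  by (simp add: diag_mult_def dinner_def inner_vec_def)

lemma dinner_sym: "dinner d u v = dinner d v u"
  unfolding dinner_def by (simp add: algebra_simps)

lemma dinner_add1: "dinner d (u + w) v = dinner d u v + dinner d w v"
  unfolding dinner_def by (simp add: algebra_simps sum.distrib)
lemma dinner_diff1: "dinner d (u - w) v = dinner d u v - dinner d w v"
  unfolding dinner_def by (simp add: algebra_simps sum_subtractf)
lemma dinner_add2: "dinner d v (u + w) = dinner d v u + dinner d v w"
  unfolding dinner_def by (simp add: algebra_simps sum.distrib)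
lemma dinner_diff2: "dinner d v (u - w) = dinner d v u - dinner d v w"
  unfolding dinner_def by (simp add: algebra_simps sum_subtractf)
lemma dinner_scale1: "dinner d (t *\<^sub>R u) v = t * dinner d u v"
  unfolding dinner_def by (simp add: algebra_simps sum_distrib_left)
lemma dinner_scale2: "dinner d v (t *\<^sub>R u) = t * dinner d v u"
  unfolding dinner_def by (simp add: algebra_simps sum_distrib_left)
lemma dinner_neg1: "dinner d (- u) v = - dinner d u v"
  unfolding dinner_def by (simp add: sum_negf)

lemma Dn_dinner: "Dnorm2 d u = dinner d u u"
  unfolding dinner_def Dnorm2_def by (simp add: power2_eq_square algebra_simps)

lemma Dn_add: "Dnorm2 d (u + v) = Dnorm2 d u + 2 * dinner d u v + Dnorm2 d v"
  unfolding Dn_dinner dinner_add1 dinner_add2 by (simp add: dinner_sym[of d v u])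

lemma Dn_diff: "Dnorm2 d (u - v) = Dnorm2 d u - 2 * dinner d u v + Dnorm2 d v"
  unfolding Dn_dinner dinner_diff1 dinner_diff2 by (simp add: dinner_sym[of d v u])

lemma Dn_scale: "Dnorm2 d (t *\<^sub>R u) = t^2 * Dnorm2 d u"
  unfolding Dn_dinner dinner_scale1 dinner_scale2 by (simp add: power2_eq_square)

lemma Dn_nonneg: "\<forall>j. d $ j > 0 \<Longrightarrow> 0 \<le> Dnorm2 d u"
  unfolding Dnorm2_def by (intro sum_nonneg) (simp add: less_imp_le)

lemma Dn_lower:
  assumes "\<forall>j. d $ j > 0"
  shows "\<exists>c>0. \<forall>u. c * (norm u)^2 \<le> Dnorm2 d u"
proof -
  let ?c = "Min (range (\<lambda>j. d $ j))"
  have fin: "finite (range (\<lambda>j. d $ j))" by simp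
  have cpos: "?c > 0" using assms fin by (subst Min_gr_iff) auto
  have cle: "?c \<le> d $ j" for j using fin by (intro Min_le) auto
  have "?c * (norm u)^2 \<le> Dnorm2 d u" for u
  proof -
    have "(norm u)^2 = u \<bullet> u" by (rule power2_norm_eq_inner)
    also have "\<dots> = (\<Sum>j\<in>UNIV. (u $ j)^2)"
      by (simp add: inner_vec_def power2_eq_square)
    finally have "(norm u)^2 = (\<Sum>j\<in>UNIV. (u $ j)^2)" .
    hence "?c * (norm u)^2 = (\<Sum>j\<in>UNIV. ?c * (u $ j)^2)" by (simp add: sum_distrib_left)
    also have "\<dots> \<le> Dnorm2 d u" unfolding Dnorm2_def
      by (intro sum_mono mult_right_mono cle) auto
    finally show ?thesis .
  qed
  thus ?thesis using cpos by blast
qed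

lemma Dn_tendsto: "(u \<longlongrightarrow> l) F \<Longrightarrow> ((\<lambda>n. Dnorm2 d (u n)) \<longlongrightarrow> Dnorm2 d l) F"
  unfolding Dnorm2_def by (intro tendsto_intros)

lemma linear_diag: "linear (diag_mult d)"
  by (intro linearI) (simp_all add: diag_mult_def vec_eq_iff algebra_simps)

lemma diag_tendsto: "(u \<longlongrightarrow> l) F \<Longrightarrow> ((\<lambda>n. diag_mult d (u n)) \<longlongrightarrow> diag_mult d l) F"
  using linear_diag[of d] by (simp add: linear_conv_bounded_linear bounded_linear.tendsto)

lemma Dn_to0:
  assumes "\<forall>j. d $ j > 0" "(\<lambda>n. Dnorm2 d (u n)) \<longlonglongrightarrow> 0"
  shows "u \<longlonglongrightarrow> 0"
proof -
  obtain c where c: "c > 0" "\<forall>u. c * (norm u)^2 \<le> Dnorm2 d u" using Dn_lower[OF assms(1)] by blast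
  have "(\<lambda>n. sqrt (Dnorm2 d (u n) / c)) \<longlonglongrightarrow> sqrt (0 / c)"
    using c(1) by (intro tendsto_intros assms(2)) auto
  hence g: "(\<lambda>n. sqrt (Dnorm2 d (u n) / c)) \<longlonglongrightarrow> 0" by simp
  have "norm (u n) \<le> sqrt (Dnorm2 d (u n) / c)" for n
  proof -
    have "(norm (u n))^2 \<le> Dnorm2 d (u n) / c" using c by (simp add: field_simps mult.commute)
    thus ?thesis by (simp add: real_le_rsqrt)
  qed
  thus ?thesis by (intro Lim_null_comparison[OF _ g]) auto
qed


lemma min_subgrad:
  fixes \<phi> :: "real^'n \<Rightarrow> real"
  assumes cvx: "convex_on UNIV \<phi>" and dpos: "\<forall>j. d $ j > 0"
    and min: "\<And>\<beta>. \<phi> y + a \<bullet> y + Dnorm2 d (y - x) / 2 \<le> \<phi> \<beta> + a \<bullet> \<beta> + Dnorm2 d (\<beta> - x) / 2"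
  shows "\<phi> w \<ge> \<phi> y + (- a - diag_mult d (y - x)) \<bullet> (w - y)"
proof -
  define K where "K = Dnorm2 d (w - y) / 2"
  define A where "A = \<phi> w - \<phi> y"
  define B where "B = (- a - diag_mult d (y - x)) \<bullet> (w - y)"
  have K0: "K \<ge> 0" using Dn_nonneg[OF dpos] by (simp add: K_def)
  have Bd: "B = - (a \<bullet> (w - y)) - dinner d (y - x) (w - y)"
    by (simp add: B_def inner_diff_left diag_inner)
  have key: "A \<ge> B - t * K" if t: "0 < t" "t \<le> 1" for t
  proof -
    let ?yt = "(1 - t) *\<^sub>R y + t *\<^sub>R w"
    have yt: "?yt = y + t *\<^sub>R (w - y)" by (simp add: algebra_simps)
    have c: "\<phi> ?yt \<le> (1 - t) * \<phi> y + t * \<phi> w"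
      using convex_onD[OF cvx, of t y w] t by auto
    have e1: "a \<bullet> ?yt = a \<bullet> y + t * (a \<bullet> (w - y))"
      unfolding yt by (simp add: inner_add_right)
    have e2': "Dnorm2 d ((y - x) + t *\<^sub>R (w - y)) = Dnorm2 d (y - x) + 2 * t * dinner d (y - x) (w - y) + t^2 * Dnorm2 d (w - y)"
      by (simp add: Dn_add Dn_scale dinner_scale2)
    have eq: "?yt - x = (y - x) + t *\<^sub>R (w - y)" by (simp add: algebra_simps)
    have e2: "Dnorm2 d (?yt - x) = Dnorm2 d (y - x) + 2 * t * dinner d (y - x) (w - y) + t^2 * Dnorm2 d (w - y)"
      unfolding eq by (rule e2')
    have m: "\<phi> y + a \<bullet> y + Dnorm2 d (y - x) / 2 \<le> \<phi> ?yt + (a \<bullet> y + t * (a \<bullet> (w - y)))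
         + (Dnorm2 d (y - x) + 2 * t * dinner d (y - x) (w - y) + t^2 * Dnorm2 d (w - y)) / 2"
      using min[of ?yt] by (simp only: e1 e2)
    have q1: "t^2 * Dnorm2 d (w - y) / 2 = t * (t * K)" by (simp add: K_def power2_eq_square)
    have q2: "(1 - t) * \<phi> y + t * \<phi> w = \<phi> y + t * A" by (simp add: A_def algebra_simps)
    have "0 \<le> t * A + t * (a \<bullet> (w - y)) + t * dinner d (y - x) (w - y) + t * (t * K)"
    proof -
      have q3: "(Dnorm2 d (y - x) + 2 * t * dinner d (y - x) (w - y) + t^2 * Dnorm2 d (w - y)) / 2
         = Dnorm2 d (y - x) / 2 + t * dinner d (y - x) (w - y) + t * (t * K)"
        using q1 by (simp add: field_simps)
      show ?thesis using m c q2 unfolding q3 by linarith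
    qed
    hence "0 \<le> t * (A + a \<bullet> (w - y) + dinner d (y - x) (w - y) + t * K)"
      by (simp add: algebra_simps)
    hence "0 \<le> A + a \<bullet> (w - y) + dinner d (y - x) (w - y) + t * K"
      using t by (simp add: zero_le_mult_iff)
    thus ?thesis using Bd by simp
  qed
  have "A \<ge> B"
  proof (rule ccontr)
    assume "\<not> A \<ge> B"
    hence pos: "B - A > 0" by simp
    define t where "t = min 1 ((B - A) / (2 * (K + 1)))"
    have t0: "0 < t" "t \<le> 1" using pos K0 by (auto simp: t_def)
    have "t * K \<le> ((B - A) / (2 * (K + 1))) * K"
      using K0 by (intro mult_right_mono) (auto simp: t_def)
    also have "\<dots> < B - A"
    proof -
      have "((B - A) / (2 * (K + 1))) * K = (B - A) * (K / (2 * (K + 1)))" by simp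
      also have "\<dots> < (B - A) * 1"
        using pos K0 by (intro mult_strict_left_mono) (auto simp: field_simps)
      finally show ?thesis by simp
    qed
    finally show False using key[OF t0] by simp
  qed
  thus ?thesis by (simp add: A_def B_def)
qed

lemma min_strong:
  fixes \<phi> :: "real^'n \<Rightarrow> real"
  assumes cvx: "convex_on UNIV \<phi>" and dpos: "\<forall>j. d $ j > 0"
    and min: "\<And>\<beta>. \<phi> y + a \<bullet> y + Dnorm2 d (y - x) / 2 \<le> \<phi> \<beta> + a \<bullet> \<beta> + Dnorm2 d (\<beta> - x) / 2"
  shows "\<phi> w + a \<bullet> w + Dnorm2 d (w - x) / 2 \<ge> \<phi> y + a \<bullet> y + Dnorm2 d (y - x) / 2 + Dnorm2 d (w - y) / 2"
proof -
  have s: "\<phi> w \<ge> \<phi> y + (- a - diag_mult d (y - x)) \<bullet> (w - y)"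
    by (rule min_subgrad[OF cvx dpos min])
  have "w - x = (y - x) + (w - y)" by simp
  hence e: "Dnorm2 d (w - x) = Dnorm2 d (y - x) + 2 * dinner d (y - x) (w - y) + Dnorm2 d (w - y)"
    by (metis Dn_add)
  have s': "\<phi> w \<ge> \<phi> y - a \<bullet> w + a \<bullet> y - dinner d (y - x) (w - y)"
    using s by (simp add: inner_diff_left inner_diff_right diag_inner dinner_diff2)
  show ?thesis using s' e by linarith
qed


locale alin =
  fixes f h :: "real^'n \<Rightarrow> real" and d :: "real^'n" and \<gamma> :: real
    and bhat bf sf bh sh :: "nat \<Rightarrow> real^'n"
  assumes cf: "convex_on UNIV f" and ch: "convex_on UNIV h"
    and dpos: "\<forall>j. d $ j > 0" and g0: "0 < \<gamma>" and g1: "\<gamma> < 1"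
    and run: "alin_run f h d \<gamma> bhat bf sf bh sh"
begin

definition "L \<beta> = f \<beta> + h \<beta>"
definition "fl k \<beta> = f (bf k) + sf k \<bullet> (\<beta> - bf k)"
definition "hl k \<beta> = h (bh (Suc k)) + sh (Suc k) \<bullet> (\<beta> - bh (Suc k))"
definition "eta k = fl k (bh (Suc k)) + h (bh (Suc k)) + Dnorm2 d (bh (Suc k) - bhat k) / 2"
definition "m k = f (bf (Suc k)) + hl k (bf (Suc k))"
definition "zeta k = m k + Dnorm2 d (bf (Suc k) - bhat k) / 2"
definition "v k = L (bhat k) - m k"
definition "w k = L (bhat k) - eta k"
definition "ser k \<longleftrightarrow> L (bf (Suc k)) \<le> (1 - \<gamma>) * L (bhat k) + \<gamma> * m k"
definition "\<sigma> k = (if ser k then v k else 0)"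

lemma run0: "bf 0 = bhat 0" "sf 0 \<in> subgrad f (bf 0)"
  using run by (auto simp: alin_run_def)

lemma hmin: "is_minimizer (\<lambda>\<beta>. f (bf k) + sf k \<bullet> (\<beta> - bf k) + h \<beta>
                           + Dnorm2 d (\<beta> - bhat k) / 2) (bh (Suc k))"
  and sh_eq: "sh (Suc k) = - sf k - diag_mult d (bh (Suc k) - bhat k)"
  and fmin: "is_minimizer (\<lambda>\<beta>. f \<beta> + (h (bh (Suc k)) + sh (Suc k) \<bullet> (\<beta> - bh (Suc k)))
                           + Dnorm2 d (\<beta> - bhat k) / 2) (bf (Suc k))"
  and sf_eq: "sf (Suc k) = - sh (Suc k) - diag_mult d (bf (Suc k) - bhat k)"
  and bhat_eq: "bhat (Suc k) = (if ser k then bf (Suc k) else bhat k)"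
proof -
  have A: "\<forall>k.
        is_minimizer (\<lambda>\<beta>. f (bf k) + sf k \<bullet> (\<beta> - bf k) + h \<beta>
                           + Dnorm2 d (\<beta> - bhat k) / 2) (bh (Suc k)) \<and>
        sh (Suc k) = - sf k - diag_mult d (bh (Suc k) - bhat k) \<and>
        is_minimizer (\<lambda>\<beta>. f \<beta> + (h (bh (Suc k)) + sh (Suc k) \<bullet> (\<beta> - bh (Suc k)))
                           + Dnorm2 d (\<beta> - bhat k) / 2) (bf (Suc k)) \<and>
        sf (Suc k) = - sh (Suc k) - diag_mult d (bf (Suc k) - bhat k) \<and>
        bhat (Suc k) =
          (if f (bf (Suc k)) + h (bf (Suc k))
                \<le> (1 - \<gamma>) * (f (bhat k) + h (bhat k))
                  + \<gamma> * (f (bf (Suc k)) + (h (bh (Suc k)) + sh (Suc k) \<bullet> (bf (Suc k) - bh (Suc k))))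
           then bf (Suc k) else bhat k)"
    using run unfolding alin_run_def by blast
  show "is_minimizer (\<lambda>\<beta>. f (bf k) + sf k \<bullet> (\<beta> - bf k) + h \<beta>
                           + Dnorm2 d (\<beta> - bhat k) / 2) (bh (Suc k))"
    "sh (Suc k) = - sf k - diag_mult d (bh (Suc k) - bhat k)"
    "is_minimizer (\<lambda>\<beta>. f \<beta> + (h (bh (Suc k)) + sh (Suc k) \<bullet> (\<beta> - bh (Suc k)))
                           + Dnorm2 d (\<beta> - bhat k) / 2) (bf (Suc k))"
    "sf (Suc k) = - sh (Suc k) - diag_mult d (bf (Suc k) - bhat k)"
    using A by blast+
  show "bhat (Suc k) = (if ser k then bf (Suc k) else bhat k)"
    using A[rule_format, of k] by (simp add: ser_def L_def m_def hl_def)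
qed

lemma hmin': "h (bh (Suc k)) + sf k \<bullet> bh (Suc k) + Dnorm2 d (bh (Suc k) - bhat k) / 2
   \<le> h \<beta> + sf k \<bullet> \<beta> + Dnorm2 d (\<beta> - bhat k) / 2"
  using hmin[of k] unfolding is_minimizer_def
  by (auto simp: inner_diff_right dest: spec[of _ \<beta>])

lemma fmin': "f (bf (Suc k)) + sh (Suc k) \<bullet> bf (Suc k) + Dnorm2 d (bf (Suc k) - bhat k) / 2
   \<le> f \<beta> + sh (Suc k) \<bullet> \<beta> + Dnorm2 d (\<beta> - bhat k) / 2"
  using fmin[of k] unfolding is_minimizer_def
  by (auto simp: inner_diff_right dest: spec[of _ \<beta>])

lemma sh_sub: "h \<beta> \<ge> h (bh (Suc k)) + sh (Suc k) \<bullet> (\<beta> - bh (Suc k))"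
  unfolding sh_eq by (rule min_subgrad[OF ch dpos hmin'])

lemma sf_sub_Suc: "f \<beta> \<ge> f (bf (Suc k)) + sf (Suc k) \<bullet> (\<beta> - bf (Suc k))"
  unfolding sf_eq by (rule min_subgrad[OF cf dpos fmin'])

lemma sf_sub: "f \<beta> \<ge> f (bf k) + sf k \<bullet> (\<beta> - bf k)"
proof (cases k)
  case 0 thus ?thesis using run0(2) by (auto simp: subgrad_def)
next
  case (Suc j) thus ?thesis using sf_sub_Suc by simp
qed

lemma fl_le: "fl k \<beta> \<le> f \<beta>" using sf_sub by (simp add: fl_def)
lemma hl_le: "hl k \<beta> \<le> h \<beta>" using sh_sub by (simp add: hl_def)

lemma F3: "fl k \<beta> + h \<beta> + Dnorm2 d (\<beta> - bhat k) / 2 \<ge> eta k + Dnorm2 d (\<beta> - bh (Suc k)) / 2"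
  using min_strong[OF ch dpos hmin'[where k=k], where w=\<beta>]
  unfolding eta_def fl_def inner_diff_right by linarith

lemma F4: "f \<beta> + hl k \<beta> + Dnorm2 d (\<beta> - bhat k) / 2 \<ge> zeta k + Dnorm2 d (\<beta> - bf (Suc k)) / 2"
  using min_strong[OF cf dpos fmin'[where k=k], where w=\<beta>]
  unfolding zeta_def m_def hl_def inner_diff_right by linarith


lemma Dn_split: "Dnorm2 d (a - c) = Dnorm2 d (b - c) + 2 * dinner d (b - c) (a - b) + Dnorm2 d (a - b)"
proof -
  have "a - c = (b - c) + (a - b)" by simp
  thus ?thesis by (metis Dn_add)
qed

lemma aggr_id: "fl k \<beta> + hl k \<beta> + Dnorm2 d (\<beta> - bhat k) / 2 = eta k + Dnorm2 d (\<beta> - bh (Suc k)) / 2"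
proof -
  define x where "x = bhat k"
  define y where "y = bh (Suc k)"
  have e1: "fl k \<beta> = fl k y + sf k \<bullet> (\<beta> - y)" by (simp add: fl_def inner_diff_right)
  have e2: "hl k \<beta> = h y - sf k \<bullet> (\<beta> - y) - dinner d (y - x) (\<beta> - y)"
    by (simp add: hl_def sh_eq inner_diff_left diag_inner x_def y_def)
  have e3: "Dnorm2 d (\<beta> - x) = Dnorm2 d (y - x) + 2 * dinner d (y - x) (\<beta> - y) + Dnorm2 d (\<beta> - y)"
    by (rule Dn_split)
  show ?thesis unfolding eta_def x_def[symmetric] y_def[symmetric] using e1 e2 e3 by linarith
qed

lemma F5: "zeta k \<ge> eta k + Dnorm2 d (bf (Suc k) - bh (Suc k)) / 2"
  using aggr_id[of k "bf (Suc k)"] fl_le[of k "bf (Suc k)"]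
  unfolding zeta_def m_def by linarith

lemma F6: "L \<beta> \<ge> m k - dinner d (bf (Suc k) - bhat k) (\<beta> - bf (Suc k))"
proof -
  have a: "f \<beta> \<ge> f (bf (Suc k)) + sf (Suc k) \<bullet> (\<beta> - bf (Suc k))" by (rule sf_sub)
  have b: "h \<beta> \<ge> hl k (bf (Suc k)) + sh (Suc k) \<bullet> (\<beta> - bf (Suc k))"
    using hl_le[of k \<beta>] by (simp add: hl_def inner_diff_right)
  have c: "sf (Suc k) \<bullet> (\<beta> - bf (Suc k)) + sh (Suc k) \<bullet> (\<beta> - bf (Suc k))
      = - dinner d (bf (Suc k) - bhat k) (\<beta> - bf (Suc k))"
    by (simp add: sf_eq inner_diff_left diag_inner)
  show ?thesis using a b c unfolding L_def m_def by linarith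
qed

lemma F7: "eta (Suc k) \<ge> m k - dinner d (bf (Suc k) - bhat k) (bh (Suc (Suc k)) - bf (Suc k))
     + Dnorm2 d (bh (Suc (Suc k)) - bhat (Suc k)) / 2"
proof -
  define y' where "y' = bh (Suc (Suc k))"
  define z where "z = bf (Suc k)"
  have a: "fl (Suc k) y' = f z + sf (Suc k) \<bullet> (y' - z)" by (simp add: fl_def z_def)
  have b: "h y' \<ge> hl k z + sh (Suc k) \<bullet> (y' - z)"
    using hl_le[of k y'] by (simp add: hl_def inner_diff_right)
  have c: "sf (Suc k) \<bullet> (y' - z) + sh (Suc k) \<bullet> (y' - z)
      = - dinner d (z - bhat k) (y' - z)"
    by (simp add: sf_eq inner_diff_left diag_inner z_def)
  show ?thesis using a b c unfolding eta_def m_def y'_def[symmetric] z_def[symmetric] by linarith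
qed

lemma w_ge: "w k \<ge> Dnorm2 d (bh (Suc k) - bhat k) / 2"
  using F3[of k "bhat k"] fl_le[of k "bhat k"] Dn_dinner[of d "bhat k - bh (Suc k)"]
    Dn_dinner[of d "bh (Suc k) - bhat k"]
  by (simp add: w_def L_def Dnorm2_def power2_commute)


lemma Dn_commute: "Dnorm2 d (a - b) = Dnorm2 d (b - a)"
  by (simp add: Dnorm2_def power2_commute)

lemma Dn_zero[simp]: "Dnorm2 d 0 = 0" by (simp add: Dnorm2_def)

lemma Dn0: "0 \<le> Dnorm2 d u" by (rule Dn_nonneg[OF dpos])

lemma Lz: "L (bhat k) \<ge> zeta k + Dnorm2 d (bf (Suc k) - bhat k) / 2"
  using F4[where k=k and \<beta>="bhat k"] hl_le[of k "bhat k"] Dn_commute[of "bhat k" "bf (Suc k)"]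
  by (simp add: L_def)

lemma v_ge: "v k \<ge> Dnorm2 d (bf (Suc k) - bhat k)"
  using Lz[of k] by (simp add: v_def zeta_def)

lemma v_nonneg: "v k \<ge> 0" using v_ge[of k] Dn0[of "bf (Suc k) - bhat k"] by linarith

lemma v_le: "v k \<le> 2 * w k"
  using Lz[of k] F5[of k] Dn0[of "bf (Suc k) - bh (Suc k)"]
  by (simp add: v_def w_def zeta_def)

lemma w_nonneg: "w k \<ge> 0" using w_ge[of k] Dn0[of "bh (Suc k) - bhat k"] by linarith

lemma null_w:
  assumes "\<not> ser k"
  shows "w (Suc k) \<le> w k - Dnorm2 d (bf (Suc k) - bh (Suc k)) / 2 - Dnorm2 d (bh (Suc (Suc k)) - bf (Suc k)) / 2"
    and "w (Suc k) \<le> v k"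
proof -
  have bx: "bhat (Suc k) = bhat k" using bhat_eq[of k] assms by simp
  have s: "Dnorm2 d (bh (Suc (Suc k)) - bhat k) = Dnorm2 d (bf (Suc k) - bhat k)
      + 2 * dinner d (bf (Suc k) - bhat k) (bh (Suc (Suc k)) - bf (Suc k)) + Dnorm2 d (bh (Suc (Suc k)) - bf (Suc k))"
    by (rule Dn_split)
  have e: "eta (Suc k) \<ge> zeta k + Dnorm2 d (bh (Suc (Suc k)) - bf (Suc k)) / 2"
    using F7[of k] s unfolding bx zeta_def by linarith
  show "w (Suc k) \<le> w k - Dnorm2 d (bf (Suc k) - bh (Suc k)) / 2 - Dnorm2 d (bh (Suc (Suc k)) - bf (Suc k)) / 2"
    using e F5[of k] unfolding w_def bx by linarith
  show "w (Suc k) \<le> v k"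
    using e Dn0[of "bh (Suc (Suc k)) - bf (Suc k)"] Dn0[of "bf (Suc k) - bhat k"]
    unfolding w_def bx v_def zeta_def by linarith
qed

lemma ser_w:
  assumes "ser k"
  shows "w (Suc k) \<le> 2 * v k"
proof -
  define x where "x = bhat k"
  define z where "z = bf (Suc k)"
  define y' where "y' = bh (Suc (Suc k))"
  have bx: "bhat (Suc k) = z" using bhat_eq[of k] assms by (simp add: z_def)
  have s: "Dnorm2 d ((y' - z) - (z - x)) = Dnorm2 d (y' - z) - 2 * dinner d (y' - z) (z - x) + Dnorm2 d (z - x)"
    by (rule Dn_diff)
  have e: "eta (Suc k) \<ge> m k - Dnorm2 d (z - x) / 2"
    using F7[of k] s Dn0[of "(y' - z) - (z - x)"] dinner_sym[of d "y' - z" "z - x"]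
    unfolding bx x_def[symmetric] z_def[symmetric] y'_def[symmetric] by linarith
  have t: "L z \<le> (1 - \<gamma>) * L x + \<gamma> * m k" using assms by (simp add: ser_def x_def z_def)
  have q: "(1 - \<gamma>) * L x + \<gamma> * m k = L x - \<gamma> * v k" by (simp add: v_def x_def algebra_simps)
  have q2: "\<gamma> * v k \<ge> 0" using g0 v_nonneg[of k] by simp
  have vd: "v k = L x - m k" by (simp add: v_def x_def)
  have wd: "w (Suc k) = L z - eta (Suc k)" by (simp add: w_def bx)
  have vg: "Dnorm2 d (z - x) \<le> v k" using v_ge[of k] by (simp add: x_def z_def)
  show ?thesis using e t q q2 vd wd vg v_nonneg[of k] by linarith
qed

lemma L_step: "L (bhat (Suc k)) \<le> L (bhat k) - \<gamma> * \<sigma> k"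
proof (cases "ser k")
  case True
  hence "L (bf (Suc k)) \<le> (1 - \<gamma>) * L (bhat k) + \<gamma> * m k" by (simp add: ser_def)
  moreover have "(1 - \<gamma>) * L (bhat k) + \<gamma> * m k = L (bhat k) - \<gamma> * v k" by (simp add: v_def algebra_simps)
  ultimately show ?thesis using True bhat_eq[of k] by (simp add: \<sigma>_def)
next
  case False thus ?thesis using bhat_eq[of k] by (simp add: \<sigma>_def)
qed

lemma sigma_nonneg: "\<sigma> k \<ge> 0" using v_nonneg by (simp add: \<sigma>_def)

lemma L_dec: "L (bhat (Suc k)) \<le> L (bhat k)"
  using L_step[of k] sigma_nonneg[of k] g0 by (smt (verit) mult_nonneg_nonneg)

lemma null_gap: "\<not> ser k \<Longrightarrow> (1 - \<gamma>) * v k < L (bf (Suc k)) - m k"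
  by (simp add: ser_def v_def algebra_simps)

lemma fejer:
  assumes p: "\<forall>\<beta>. L p \<le> L \<beta>"
  shows "Dnorm2 d (bhat (Suc k) - p) \<le> Dnorm2 d (bhat k - p) + 2 * \<sigma> k"
proof (cases "ser k")
  case True
  define x where "x = bhat k"
  define z where "z = bf (Suc k)"
  have bx: "bhat (Suc k) = z" using bhat_eq[of k] True by (simp add: z_def)
  have a: "L p \<ge> m k - dinner d (z - x) (p - z)" using F6[where \<beta>=p and k=k] by (simp add: x_def z_def)
  have b: "dinner d (z - x) (p - z) = - dinner d (z - x) (z - p)" by (simp add: dinner_diff2)
  have c: "Dnorm2 d (z - p) = Dnorm2 d (x - p) + 2 * dinner d (x - p) (z - x) + Dnorm2 d (z - x)"
    by (rule Dn_split)
  have e: "dinner d (x - p) (z - x) = dinner d (z - x) (z - p) - Dnorm2 d (z - x)"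
    using dinner_sym[of d p x] dinner_sym[of d x z] dinner_sym[of d z p]
    by (simp add: dinner_sym[of d "x - p"] Dn_dinner dinner_diff2 dinner_diff1 algebra_simps)
  have f: "L p \<le> L x" using p by simp
  show ?thesis using a b c e f True Dn0[of "z - x"] unfolding bx \<sigma>_def v_def x_def[symmetric] by simp
next
  case False thus ?thesis using bhat_eq[of k] by (simp add: \<sigma>_def)
qed


end

lemma subgrad_bound:
  fixes h :: "real^'n \<Rightarrow> real"
  assumes hc: "continuous_on UNIV h"
  shows "\<exists>M. \<forall>y s. y \<in> cball x R \<longrightarrow> (\<forall>\<beta>. h \<beta> \<ge> h y + s \<bullet> (\<beta> - y)) \<longrightarrow> norm s \<le> M"
proof -
  have "compact (h ` cball x (R + 1))"
    by (intro compact_continuous_image continuous_on_subset[OF hc]) auto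
  then obtain B where B: "\<forall>u\<in>cball x (R + 1). norm (h u) \<le> B"
    using compact_imp_bounded[of "h ` cball x (R + 1)"] by (auto simp: bounded_iff)
  have "norm s \<le> 2 * B" if y: "y \<in> cball x R" and s: "\<forall>\<beta>. h \<beta> \<ge> h y + s \<bullet> (\<beta> - y)" for y s
  proof (cases "s = 0")
    case True
    have "norm (h y) \<le> B" using B y by auto
    hence "B \<ge> 0" by (meson norm_ge_zero order_trans)
    thus ?thesis using True by simp
  next
    case False
    define \<beta> where "\<beta> = y + (1 / norm s) *\<^sub>R s"
    have nb: "norm (\<beta> - y) = 1" using False by (simp add: \<beta>_def)
    have "dist x \<beta> \<le> dist x y + dist y \<beta>" by (rule dist_triangle)
    also have "dist y \<beta> = 1" using nb by (simp add: dist_norm norm_minus_commute)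
    finally have "\<beta> \<in> cball x (R + 1)" using y by auto
    hence hb: "norm (h \<beta>) \<le> B" using B by auto
    have hy: "norm (h y) \<le> B" using B y by auto
    have "s \<bullet> (\<beta> - y) = norm s" using False
      by (simp add: \<beta>_def inner_scaleR_right dot_square_norm power2_eq_square)
    hence "h \<beta> \<ge> h y + norm s" using s by metis
    thus ?thesis using hb hy by (simp add: abs_le_iff) 
  qed
  thus ?thesis by blast
qed

locale alin_min = alin +
  fixes p
  assumes pmin: "\<forall>\<beta>. f p + h p \<le> f \<beta> + h \<beta>"
begin

lemma Lp: "L p \<le> L \<beta>" using pmin by (simp add: L_def)

lemma L_conv: obtains lL where "(\<lambda>k. L (bhat k)) \<longlonglongrightarrow> lL"
proof -
  have "decseq (\<lambda>k. L (bhat k))" by (intro decseq_SucI L_dec)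
  then obtain lL where "(\<lambda>k. L (bhat k)) \<longlonglongrightarrow> lL"
    using decseq_convergent[of "\<lambda>k. L (bhat k)" "L p"] Lp by blast
  thus ?thesis using that by blast
qed

lemma sigma_lim: "\<sigma> \<longlonglongrightarrow> 0"
proof -
  obtain lL where l: "(\<lambda>k. L (bhat k)) \<longlonglongrightarrow> lL" using L_conv by blast
  have "(\<lambda>k. (L (bhat k) - L (bhat (Suc k))) / \<gamma>) \<longlonglongrightarrow> (lL - lL) / \<gamma>"
    using g0 by (intro tendsto_intros l LIMSEQ_Suc[OF l]) auto
  hence u: "(\<lambda>k. (L (bhat k) - L (bhat (Suc k))) / \<gamma>) \<longlonglongrightarrow> 0" by simp
  have "\<sigma> k \<le> (L (bhat k) - L (bhat (Suc k))) / \<gamma>" for k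
    using L_step[of k] g0 by (simp add: field_simps)
  thus ?thesis using sigma_nonneg
    by (intro real_tendsto_sandwich[OF _ _ tendsto_const u]) auto
qed

lemma w_lim_B:
  assumes inf: "\<forall>N. \<exists>k\<ge>N. ser k"
  shows "w \<longlonglongrightarrow> 0"
proof (rule LIMSEQ_I)
  fix r :: real assume r: "0 < r"
  obtain N where N: "\<forall>k\<ge>N. norm (\<sigma> k - 0) < r / 2"
    using LIMSEQ_D[OF sigma_lim, of "r / 2"] r by auto
  obtain k0 where k0: "k0 \<ge> N" "ser k0" using inf by blast
  have sw: "w (Suc k) < r" if "k \<ge> N" "ser k" for k
  proof -
    have "\<sigma> k < r / 2" using N that by auto
    thus ?thesis using ser_w[OF that(2)] that(2) by (simp add: \<sigma>_def)
  qed
  have main: "w (Suc k0 + j) < r" for j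
  proof (induction j)
    case 0 thus ?case using sw k0 by simp
  next
    case (Suc j)
    show ?case
    proof (cases "ser (Suc k0 + j)")
      case True thus ?thesis using sw[of "Suc k0 + j"] k0 by simp
    next
      case False
      have "w (Suc (Suc k0 + j)) \<le> w (Suc k0 + j)"
        using null_w(1)[OF False] Dn0[of "bf (Suc (Suc k0 + j)) - bh (Suc (Suc k0 + j))"]
          Dn0[of "bh (Suc (Suc (Suc k0 + j))) - bf (Suc (Suc k0 + j))"] by linarith
      thus ?thesis using Suc by simp
    qed
  qed
  show "\<exists>no. \<forall>n\<ge>no. norm (w n - 0) < r"
  proof (intro exI allI impI)
    fix n assume "n \<ge> Suc k0"
    then obtain j where "n = Suc k0 + j" using le_Suc_ex by blast
    thus "norm (w n - 0) < r" using main[of j] w_nonneg[of n] by simp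
  qed
qed


lemma h_cont: "continuous_on UNIV h" by (rule convex_on_continuous[OF open_UNIV ch])
lemma f_cont: "continuous_on UNIV f" by (rule convex_on_continuous[OF open_UNIV cf])

lemma w_lim_A:
  assumes fin: "\<forall>k\<ge>N. \<not> ser k"
  shows "w \<longlonglongrightarrow> 0"
proof -
  define x where "x = bhat N"
  have bc: "bhat (n + N) = x" for n
  proof (induction n)
    case 0 thus ?case by (simp add: x_def)
  next
    case (Suc n)
    have "\<not> ser (n + N)" using fin by simp
    thus ?case using bhat_eq[of "n + N"] Suc by simp
  qed
  have wdec: "w (Suc k) \<le> w k - Dnorm2 d (bf (Suc k) - bh (Suc k)) / 2" if "k \<ge> N" for k
    using null_w(1)[of k] fin that Dn0[of "bh (Suc (Suc k)) - bf (Suc k)"] by force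
  have wdec': "w (Suc k) \<le> w k" if "k \<ge> N" for k
    using wdec[OF that] Dn0[of "bf (Suc k) - bh (Suc k)"] by linarith
  have wN: "w (n + N) \<le> w N" for n
  proof (induction n)
    case 0 thus ?case by simp
  next
    case (Suc n) thus ?case using wdec'[of "n + N"] by simp
  qed
  have "decseq (\<lambda>n. w (n + N))" by (intro decseq_SucI) (simp add: wdec')
  then obtain lw where lw: "(\<lambda>n. w (n + N)) \<longlonglongrightarrow> lw"
    using decseq_convergent[of "\<lambda>n. w (n + N)" 0] w_nonneg by blast
  have "(\<lambda>n. 2 * (w (n + N) - w (Suc n + N))) \<longlonglongrightarrow> 2 * (lw - lw)"
  proof -
    have lw': "(\<lambda>n. w (Suc n + N)) \<longlonglongrightarrow> lw" using LIMSEQ_Suc[OF lw] by simp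
    show ?thesis by (intro tendsto_intros lw lw')
  qed
  hence du: "(\<lambda>n. 2 * (w (n + N) - w (Suc n + N))) \<longlonglongrightarrow> 0" by simp
  define a where "a n = bf (Suc (n + N))" for n
  define b where "b n = bh (Suc (n + N))" for n
  have "(\<lambda>n. Dnorm2 d (a n - b n)) \<longlonglongrightarrow> 0"
  proof (rule real_tendsto_sandwich[OF _ _ tendsto_const du])
    show "\<forall>\<^sub>F n in sequentially. 0 \<le> Dnorm2 d (a n - b n)" using Dn0 by auto
    show "\<forall>\<^sub>F n in sequentially. Dnorm2 d (a n - b n) \<le> 2 * (w (n + N) - w (Suc n + N))"
    proof (intro always_eventually allI)
      fix n
      have "w (Suc (n + N)) \<le> w (n + N) - Dnorm2 d (a n - b n) / 2"
        using wdec[of "n + N"] by (simp add: a_def b_def)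
      thus "Dnorm2 d (a n - b n) \<le> 2 * (w (n + N) - w (Suc n + N))" by simp
    qed
  qed
  hence ab: "(\<lambda>n. a n - b n) \<longlonglongrightarrow> 0" by (rule Dn_to0[OF dpos])
  obtain c where c: "c > 0" "\<forall>u. c * (norm u)^2 \<le> Dnorm2 d u" using Dn_lower[OF dpos] by blast
  define R where "R = sqrt (2 * w N / c)"
  have inS: "u \<in> cball x R" if "Dnorm2 d (u - x) \<le> 2 * w N" for u
  proof -
    have "c * (norm (u - x))^2 \<le> 2 * w N" using c(2)[rule_format, of "u - x"] that by linarith
    hence "(norm (u - x))^2 \<le> 2 * w N / c" using c(1) by (simp add: field_simps mult.commute)
    hence "norm (u - x) \<le> R" unfolding R_def by (rule real_le_rsqrt)
    thus ?thesis by (simp add: dist_norm norm_minus_commute)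
  qed
  have aS: "a n \<in> cball x R" for n
  proof (rule inS)
    have "Dnorm2 d (a n - x) \<le> v (n + N)" using v_ge[of "n + N"] bc[of n] by (simp add: a_def)
    also have "\<dots> \<le> 2 * w (n + N)" by (rule v_le)
    also have "\<dots> \<le> 2 * w N" using wN[of n] by simp
    finally show "Dnorm2 d (a n - x) \<le> 2 * w N" .
  qed
  have bS: "b n \<in> cball x R" for n
  proof (rule inS)
    have "Dnorm2 d (b n - x) \<le> 2 * w (n + N)" using w_ge[of "n + N"] bc[of n] by (simp add: b_def)
    also have "\<dots> \<le> 2 * w N" using wN[of n] by simp
    finally show "Dnorm2 d (b n - x) \<le> 2 * w N" .
  qed
  have uc: "uniformly_continuous_on (cball x R) h"
    by (intro compact_uniformly_continuous continuous_on_subset[OF h_cont]) auto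
  have "(\<lambda>n. dist (a n) (b n)) \<longlonglongrightarrow> 0"
    using ab by (simp add: dist_norm tendsto_norm_zero_iff)
  hence hd: "(\<lambda>n. dist (h (a n)) (h (b n))) \<longlonglongrightarrow> 0"
    using uc aS bS unfolding uniformly_continuous_on_sequentially by blast
  obtain M where M: "\<forall>y s. y \<in> cball x R \<longrightarrow> (\<forall>\<beta>. h \<beta> \<ge> h y + s \<bullet> (\<beta> - y)) \<longrightarrow> norm s \<le> M"
    using subgrad_bound[OF h_cont] by blast
  have Mb: "norm (sh (Suc (n + N))) \<le> M" for n
    using M bS[of n] sh_sub[where k="n + N"] by (auto simp: b_def)
  define gap where "gap n = L (a n) - m (n + N)" for n
  have gap_eq: "gap n = h (a n) - h (b n) - sh (Suc (n + N)) \<bullet> (a n - b n)" for n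
    by (simp add: gap_def L_def m_def hl_def a_def b_def)
  have "(\<lambda>n. sh (Suc (n + N)) \<bullet> (a n - b n)) \<longlonglongrightarrow> 0"
  proof (rule Lim_null_comparison)
    have "(\<lambda>n. M * norm (a n - b n)) \<longlonglongrightarrow> M * 0"
      by (intro tendsto_intros) (simp add: ab tendsto_norm_zero_iff)
    thus "(\<lambda>n. M * norm (a n - b n)) \<longlonglongrightarrow> 0" by simp
    show "\<forall>\<^sub>F n in sequentially. norm (sh (Suc (n + N)) \<bullet> (a n - b n)) \<le> M * norm (a n - b n)"
    proof (intro always_eventually allI)
      fix n
      have "norm (sh (Suc (n + N)) \<bullet> (a n - b n)) \<le> norm (sh (Suc (n + N))) * norm (a n - b n)"
        using Cauchy_Schwarz_ineq2 by simp
      also have "\<dots> \<le> M * norm (a n - b n)" by (intro mult_right_mono Mb) auto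
      finally show "norm (sh (Suc (n + N)) \<bullet> (a n - b n)) \<le> M * norm (a n - b n)" .
    qed
  qed
  moreover have "(\<lambda>n. h (a n) - h (b n)) \<longlonglongrightarrow> 0"
    using hd by (simp add: dist_real_def tendsto_rabs_zero_iff)
  ultimately have "(\<lambda>n. h (a n) - h (b n) - sh (Suc (n + N)) \<bullet> (a n - b n)) \<longlonglongrightarrow> 0 - 0"
    by (intro tendsto_intros)
  hence "(\<lambda>n. gap n / (1 - \<gamma>)) \<longlonglongrightarrow> 0 / (1 - \<gamma>)"
    using g1 by (intro tendsto_intros) (auto simp: gap_eq)
  hence gl: "(\<lambda>n. gap n / (1 - \<gamma>)) \<longlonglongrightarrow> 0" by simp
  have vl: "(\<lambda>n. v (n + N)) \<longlonglongrightarrow> 0"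
  proof (rule real_tendsto_sandwich[OF _ _ tendsto_const gl])
    show "\<forall>\<^sub>F n in sequentially. 0 \<le> v (n + N)" using v_nonneg by auto
    show "\<forall>\<^sub>F n in sequentially. v (n + N) \<le> gap n / (1 - \<gamma>)"
    proof (intro always_eventually allI)
      fix n
      have "(1 - \<gamma>) * v (n + N) < gap n" using null_gap[of "n + N"] fin by (simp add: gap_def a_def)
      thus "v (n + N) \<le> gap n / (1 - \<gamma>)" using g1 by (simp add: field_simps)
    qed
  qed
  have "(\<lambda>n. w (Suc (n + N))) \<longlonglongrightarrow> 0"
  proof (rule real_tendsto_sandwich[OF _ _ tendsto_const vl])
    show "\<forall>\<^sub>F n in sequentially. 0 \<le> w (Suc (n + N))" using w_nonneg by auto
    show "\<forall>\<^sub>F n in sequentially. w (Suc (n + N)) \<le> v (n + N)"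
      using null_w(2) fin by auto
  qed
  hence "(\<lambda>n. w (n + Suc N)) \<longlonglongrightarrow> 0" by simp
  thus ?thesis by (rule LIMSEQ_offset)
qed

lemma w_lim: "w \<longlonglongrightarrow> 0"
proof (cases "\<forall>N. \<exists>k\<ge>N. ser k")
  case True thus ?thesis by (rule w_lim_B)
next
  case False
  then obtain N where "\<forall>k\<ge>N. \<not> ser k" by blast
  thus ?thesis by (rule w_lim_A)
qed



end



context alin_min begin

lemma v_lim: "v \<longlonglongrightarrow> 0"
proof -
  have "(\<lambda>k. 2 * w k) \<longlonglongrightarrow> 2 * 0" by (intro tendsto_intros w_lim)
  hence l: "(\<lambda>k. 2 * w k) \<longlonglongrightarrow> 0" by simp
  show ?thesis using v_nonneg v_le
    by (intro real_tendsto_sandwich[OF _ _ tendsto_const l]) auto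
qed

lemma zx_lim: "(\<lambda>k. bf (Suc k) - bhat k) \<longlonglongrightarrow> 0"
proof (rule Dn_to0[OF dpos])
  show "(\<lambda>k. Dnorm2 d (bf (Suc k) - bhat k)) \<longlonglongrightarrow> 0"
    using Dn0 v_ge by (intro real_tendsto_sandwich[OF _ _ tendsto_const v_lim]) auto
qed

lemma yx_lim: "(\<lambda>k. bh (Suc k) - bhat k) \<longlonglongrightarrow> 0"
proof (rule Dn_to0[OF dpos])
  have "(\<lambda>k. 2 * w k) \<longlonglongrightarrow> 2 * 0" by (intro tendsto_intros w_lim)
  hence l: "(\<lambda>k. 2 * w k) \<longlonglongrightarrow> 0" by simp
  have le: "Dnorm2 d (bh (Suc k) - bhat k) \<le> 2 * w k" for k using w_ge[of k] by simp
  show "(\<lambda>k. Dnorm2 d (bh (Suc k) - bhat k)) \<longlonglongrightarrow> 0"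
    using Dn0 le by (intro real_tendsto_sandwich[OF _ _ tendsto_const l]) auto
qed

lemma L_cont: "isCont L x"
proof -
  have "continuous_on UNIV L" unfolding L_def[abs_def]
    by (intro continuous_on_add f_cont h_cont)
  thus ?thesis by (simp add: continuous_on_eq_continuous_at)
qed

lemma diag0: "diag_mult d 0 = 0" by (simp add: diag_mult_def vec_eq_iff)

lemma conv: "\<exists>xb. (\<forall>\<beta>. L xb \<le> L \<beta>) \<and> bhat \<longlonglongrightarrow> xb"
proof -
  define \<Phi> where "\<Phi> k = Dnorm2 d (bhat k - p) + (2 / \<gamma>) * L (bhat k)" for k
  have \<Phi>dec: "\<Phi> (Suc k) \<le> \<Phi> k" for k
  proof -
    have a: "Dnorm2 d (bhat (Suc k) - p) \<le> Dnorm2 d (bhat k - p) + 2 * \<sigma> k"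
      using fejer[of p k] Lp by blast
    have "(2 / \<gamma>) * L (bhat (Suc k)) \<le> (2 / \<gamma>) * (L (bhat k) - \<gamma> * \<sigma> k)"
      using L_step[of k] g0 by (intro mult_left_mono) auto
    also have "\<dots> = (2 / \<gamma>) * L (bhat k) - 2 * \<sigma> k" using g0 by (simp add: field_simps)
    finally show ?thesis using a by (simp add: \<Phi>_def)
  qed
  have \<Phi>0: "\<Phi> k \<le> \<Phi> 0" for k
  proof (induction k)
    case 0 show ?case by simp
  next
    case (Suc k) thus ?case using \<Phi>dec[of k] by linarith
  qed
  define B where "B = \<Phi> 0 - (2 / \<gamma>) * L p"
  have DB: "Dnorm2 d (bhat k - p) \<le> B" for k
  proof -
    have "(2 / \<gamma>) * L p \<le> (2 / \<gamma>) * L (bhat k)" using Lp g0 by (intro mult_left_mono) auto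
    thus ?thesis using \<Phi>0[of k] by (simp add: B_def \<Phi>_def)
  qed
  obtain c where c: "c > 0" "\<forall>u. c * (norm u)^2 \<le> Dnorm2 d u" using Dn_lower[OF dpos] by blast
  define R where "R = sqrt (B / c)"
  have inS: "bhat k \<in> cball p R" for k
  proof -
    have "c * (norm (bhat k - p))^2 \<le> B" using c(2)[rule_format, of "bhat k - p"] DB[of k] by linarith
    hence "(norm (bhat k - p))^2 \<le> B / c" using c(1) by (simp add: field_simps mult.commute)
    hence "norm (bhat k - p) \<le> R" unfolding R_def by (rule real_le_rsqrt)
    thus ?thesis by (simp add: dist_norm norm_minus_commute)
  qed
  obtain xb r where xS: "xb \<in> cball p R" and r: "strict_mono (r :: nat \<Rightarrow> nat)" and xr: "(bhat \<circ> r) \<longlonglongrightarrow> xb"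
    by (rule seq_compactE[OF compact_imp_seq_compact[OF compact_cball[of p R]] allI[OF inS]])
  have xr': "(\<lambda>n. bhat (r n)) \<longlonglongrightarrow> xb" using xr by (simp add: comp_def)
  have xbmin: "L xb \<le> L \<beta>" for \<beta>
  proof -
    have zr: "(\<lambda>n. bf (Suc (r n)) - bhat (r n)) \<longlonglongrightarrow> 0"
      using LIMSEQ_subseq_LIMSEQ[OF zx_lim r] by (simp add: comp_def)
    have vr: "(\<lambda>n. v (r n)) \<longlonglongrightarrow> 0"
      using LIMSEQ_subseq_LIMSEQ[OF v_lim r] by (simp add: comp_def)
    have zb: "(\<lambda>n. bf (Suc (r n))) \<longlonglongrightarrow> 0 + xb"
    proof -
      have "(\<lambda>n. (bf (Suc (r n)) - bhat (r n)) + bhat (r n)) \<longlonglongrightarrow> 0 + xb"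
        by (intro tendsto_intros zr xr')
      thus ?thesis by simp
    qed
    have dr: "(\<lambda>n. diag_mult d (bf (Suc (r n)) - bhat (r n))) \<longlonglongrightarrow> diag_mult d 0"
      by (rule diag_tendsto[OF zr])
    have Lr: "(\<lambda>n. L (bhat (r n))) \<longlonglongrightarrow> L xb" by (rule isCont_tendsto_compose[OF L_cont xr'])
    have "(\<lambda>n. L (bhat (r n)) - v (r n) - diag_mult d (bf (Suc (r n)) - bhat (r n)) \<bullet> (\<beta> - bf (Suc (r n))))
        \<longlonglongrightarrow> L xb - 0 - diag_mult d 0 \<bullet> (\<beta> - (0 + xb))"
      by (rule tendsto_diff[OF tendsto_diff[OF Lr vr] tendsto_inner[OF dr tendsto_diff[OF tendsto_const zb]]])
    hence lim: "(\<lambda>n. L (bhat (r n)) - v (r n) - diag_mult d (bf (Suc (r n)) - bhat (r n)) \<bullet> (\<beta> - bf (Suc (r n))))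
        \<longlonglongrightarrow> L xb" by (simp add: diag0)
    have "L (bhat (r n)) - v (r n) - diag_mult d (bf (Suc (r n)) - bhat (r n)) \<bullet> (\<beta> - bf (Suc (r n))) \<le> L \<beta>" for n
      using F6[where \<beta>=\<beta> and k="r n"] by (simp add: v_def diag_inner)
    thus ?thesis by (intro tendsto_le[OF trivial_limit_sequentially tendsto_const lim]) auto
  qed
  \<comment> \<open>Fejer argument\<close>
  define \<Psi> where "\<Psi> k = Dnorm2 d (bhat k - xb) + (2 / \<gamma>) * (L (bhat k) - L xb)" for k
  have \<Psi>dec: "\<Psi> (Suc k) \<le> \<Psi> k" for k
  proof -
    have a: "Dnorm2 d (bhat (Suc k) - xb) \<le> Dnorm2 d (bhat k - xb) + 2 * \<sigma> k"
      using fejer[of xb k] xbmin by blast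
    have "(2 / \<gamma>) * (L (bhat (Suc k)) - L xb) \<le> (2 / \<gamma>) * (L (bhat k) - \<gamma> * \<sigma> k - L xb)"
      using L_step[of k] g0 by (intro mult_left_mono) auto
    also have "\<dots> = (2 / \<gamma>) * (L (bhat k) - L xb) - 2 * \<sigma> k" using g0 by (simp add: field_simps)
    finally show ?thesis using a by (simp add: \<Psi>_def)
  qed
  have Dle: "Dnorm2 d (bhat k - xb) \<le> \<Psi> k" for k
  proof -
    have "0 \<le> (2 / \<gamma>) * (L (bhat k) - L xb)" using xbmin[of "bhat k"] g0 by simp
    thus ?thesis by (simp add: \<Psi>_def)
  qed
  have \<Psi>nn: "0 \<le> \<Psi> k" for k using Dle[of k] Dn0[of "bhat k - xb"] by linarith
  have dP: "decseq \<Psi>" by (intro decseq_SucI \<Psi>dec)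
  obtain l\<Psi> where l\<Psi>: "\<Psi> \<longlonglongrightarrow> l\<Psi>" "\<forall>i. l\<Psi> \<le> \<Psi> i"
    by (rule decseq_convergent[OF dP allI[OF \<Psi>nn]])
  have "(\<lambda>n. \<Psi> (r n)) \<longlonglongrightarrow> Dnorm2 d (xb - xb) + (2 / \<gamma>) * (L xb - L xb)"
    unfolding \<Psi>_def
    by (rule tendsto_add[OF Dn_tendsto[OF tendsto_diff[OF xr' tendsto_const]]
          tendsto_mult[OF tendsto_const tendsto_diff[OF isCont_tendsto_compose[OF L_cont xr'] tendsto_const]]])
  hence "(\<lambda>n. \<Psi> (r n)) \<longlonglongrightarrow> 0" by simp
  moreover have "(\<lambda>n. \<Psi> (r n)) \<longlonglongrightarrow> l\<Psi>"
    using LIMSEQ_subseq_LIMSEQ[OF l\<Psi>(1) r] by (simp add: comp_def)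
  ultimately have l0: "0 = l\<Psi>" by (rule LIMSEQ_unique)
  have P0: "\<Psi> \<longlonglongrightarrow> 0" unfolding l0 by (rule l\<Psi>(1))
  have "(\<lambda>k. Dnorm2 d (bhat k - xb)) \<longlonglongrightarrow> 0"
  proof (rule real_tendsto_sandwich[OF _ _ tendsto_const P0])
    show "\<forall>\<^sub>F n in sequentially. 0 \<le> Dnorm2 d (bhat n - xb)" by (simp add: Dn0)
    show "\<forall>\<^sub>F n in sequentially. Dnorm2 d (bhat n - xb) \<le> \<Psi> n" by (simp add: Dle)
  qed
  hence "(\<lambda>k. bhat k - xb) \<longlonglongrightarrow> 0" by (rule Dn_to0[OF dpos])
  hence "bhat \<longlonglongrightarrow> xb" by (simp add: LIM_zero_iff)
  thus ?thesis using xbmin by blast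
qed

end


theorem theorem1:
  fixes f h :: "real^'n \<Rightarrow> real" and d :: "real^'n" and \<gamma> :: real
    and bhat bf sf bh sh :: "nat \<Rightarrow> real^'n"
  assumes "convex_on UNIV f" and "convex_on UNIV h"
    and "\<exists>x. is_minimizer (\<lambda>\<beta>. f \<beta> + h \<beta>) x"
    and "\<forall>j. d $ j > 0"
    and "0 < \<gamma>" and "\<gamma> < 1"
    and "alin_run f h d \<gamma> bhat bf sf bh sh"
  shows "\<exists>\<beta>s. is_minimizer (\<lambda>\<beta>. f \<beta> + h \<beta>) \<beta>s \<and> bhat \<longlonglongrightarrow> \<beta>s \<and>
           (\<forall>a b r. strict_mono r \<and> (\<lambda>n. sf (r n)) \<longlonglongrightarrow> a \<and> (\<lambda>n. sh (r n)) \<longlonglongrightarrow> b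
              \<longrightarrow> a \<in> subgrad f \<beta>s \<and> b \<in> subgrad h \<beta>s \<and> a + b = 0)"
proof -
  obtain p where p: "is_minimizer (\<lambda>\<beta>. f \<beta> + h \<beta>) p" using assms(3) by blast
  interpret alin_min f h d \<gamma> bhat bf sf bh sh p
    by unfold_locales (use assms p in \<open>auto simp: is_minimizer_def\<close>)
  obtain xb where xmin: "\<forall>\<beta>. L xb \<le> L \<beta>" and xl: "bhat \<longlonglongrightarrow> xb" using conv by blast
  have bfl: "bf \<longlonglongrightarrow> xb"
  proof -
    have "(\<lambda>k. (bf (Suc k) - bhat k) + bhat k) \<longlonglongrightarrow> 0 + xb"
      by (rule tendsto_add[OF zx_lim xl])
    hence "(\<lambda>k. bf (Suc k)) \<longlonglongrightarrow> xb" by simp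
    thus ?thesis by (simp add: filterlim_sequentially_Suc)
  qed
  have bhl: "bh \<longlonglongrightarrow> xb"
  proof -
    have "(\<lambda>k. (bh (Suc k) - bhat k) + bhat k) \<longlonglongrightarrow> 0 + xb"
      by (rule tendsto_add[OF yx_lim xl])
    hence "(\<lambda>k. bh (Suc k)) \<longlonglongrightarrow> xb" by simp
    thus ?thesis by (simp add: filterlim_sequentially_Suc)
  qed
  have sl: "(\<lambda>k. sf k + sh k) \<longlonglongrightarrow> 0"
  proof -
    have "(\<lambda>k. - diag_mult d (bf (Suc k) - bhat k)) \<longlonglongrightarrow> - diag_mult d 0"
      by (rule tendsto_minus[OF diag_tendsto[OF zx_lim]])
    moreover have "sf (Suc k) + sh (Suc k) = - diag_mult d (bf (Suc k) - bhat k)" for k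
      by (simp add: sf_eq[of k])
    ultimately have "(\<lambda>k. sf (Suc k) + sh (Suc k)) \<longlonglongrightarrow> 0" by (simp add: diag0)
    thus ?thesis by (rule filterlim_sequentially_Suc[THEN iffD1])
  qed
  have fc: "isCont f xb" using f_cont by (simp add: continuous_on_eq_continuous_at)
  have hc: "isCont h xb" using h_cont by (simp add: continuous_on_eq_continuous_at)
  have part3: "a \<in> subgrad f xb \<and> b \<in> subgrad h xb \<and> a + b = 0"
    if r: "strict_mono r" and ar: "(\<lambda>n. sf (r n)) \<longlonglongrightarrow> a" and br: "(\<lambda>n. sh (r n)) \<longlonglongrightarrow> b"
    for a b r
  proof (intro conjI)
    have bfr: "(\<lambda>n. bf (r n)) \<longlonglongrightarrow> xb" using LIMSEQ_subseq_LIMSEQ[OF bfl r] by (simp add: comp_def)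
    have bhr: "(\<lambda>n. bh (r n)) \<longlonglongrightarrow> xb" using LIMSEQ_subseq_LIMSEQ[OF bhl r] by (simp add: comp_def)
    show "a \<in> subgrad f xb" unfolding subgrad_def
    proof (intro CollectI allI)
      fix y
      have lim: "(\<lambda>n. f (bf (r n)) + sf (r n) \<bullet> (y - bf (r n))) \<longlonglongrightarrow> f xb + a \<bullet> (y - xb)"
        by (rule tendsto_add[OF isCont_tendsto_compose[OF fc bfr] tendsto_inner[OF ar tendsto_diff[OF tendsto_const bfr]]])
      show "f y \<ge> f xb + a \<bullet> (y - xb)"
        by (rule tendsto_le[OF trivial_limit_sequentially tendsto_const lim]) (simp add: sf_sub)
    qed
    show "b \<in> subgrad h xb" unfolding subgrad_def
    proof (intro CollectI allI)
      fix y
      have lim: "(\<lambda>n. h (bh (r n)) + sh (r n) \<bullet> (y - bh (r n))) \<longlonglongrightarrow> h xb + b \<bullet> (y - xb)"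
        by (rule tendsto_add[OF isCont_tendsto_compose[OF hc bhr] tendsto_inner[OF br tendsto_diff[OF tendsto_const bhr]]])
      have ev: "\<forall>\<^sub>F n in sequentially. h (bh (r n)) + sh (r n) \<bullet> (y - bh (r n)) \<le> h y"
        unfolding eventually_sequentially
      proof (intro exI allI impI)
        fix n :: nat assume "n \<ge> 1"
        hence "r n \<ge> 1" using seq_suble[OF r, of n] by linarith
        then obtain j where j: "r n = Suc j" by (metis Suc_diff_1 less_le_trans zero_less_one)
        show "h (bh (r n)) + sh (r n) \<bullet> (y - bh (r n)) \<le> h y"
          unfolding j by (rule sh_sub)
      qed
      show "h y \<ge> h xb + b \<bullet> (y - xb)"
        by (rule tendsto_le[OF trivial_limit_sequentially tendsto_const lim ev])
    qed
    have "(\<lambda>n. sf (r n) + sh (r n)) \<longlonglongrightarrow> 0"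
      using LIMSEQ_subseq_LIMSEQ[OF sl r] by (simp add: comp_def)
    moreover have "(\<lambda>n. sf (r n) + sh (r n)) \<longlonglongrightarrow> a + b" by (rule tendsto_add[OF ar br])
    ultimately show "a + b = 0" using LIMSEQ_unique by metis
  qed
  have mm: "is_minimizer (\<lambda>\<beta>. f \<beta> + h \<beta>) xb" using xmin by (simp add: is_minimizer_def L_def)
  show ?thesis using mm xl part3 by blast
qed

end
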